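(* Let $n\ge2$, $\gamma\in(0,1)$, $\lambda\in\mathbb R$, $\Sigma_\lambda=\{(t,\theta)\in\mathcal C:t<\lambda\}$, and for $z=(t,\theta)$ let $z^\lambda=(2\lambda-t,\theta)$. Let $f:\mathbb R\to\mathbb R$ satisfy $f(s)\geq0$ for $s\geq0$. Let $v$ be a function on $\mathcal C$ with $P_\gamma v=f(v)$ in $\Sigma_\lambda$, $v\geq0$ in $\Sigma_\lambda$, and $v$ anti-symmetric with respect to $\partial\Sigma_\lambda$, i.e. $v(z^\lambda)=-v(z)$. Then either $v\equiv0$ or $v>0$ in $\Sigma_\lambda$.
   Context: $\mathcal C=\mathbb R\times\mathbb S^{n-1}$ with $d\mu=dt\,d\theta$. $K(t,\tilde t,\theta,\tilde\theta)=\frac{e^{-\frac{n+2\gamma}{2}|t-\tilde t|}}{(1+e^{-2|t-\tilde t|}-2e^{-|t-\tilde t|}\langle\theta,\tilde\theta\rangle)^{\frac{n+2\gamma}{2}}}$, $\varsigma_{n,\gamma}=\pi^{-n/2}2^{2\gamma}\frac{\Gamma(\frac n2+\gamma)}{\Gamma(1-\gamma)}\gamma$, $c_{n,\gamma}=2^{2\gamma}\Big(\frac{\Gamma(\frac12(\frac n2+\gamma))}{\Gamma(\frac12(\frac n2-\gamma))}\Big)^2$, and $P_\gamma v(t,\theta)=\varsigma_{n,\gamma}\mathrm{P.V.}\int_{\mathcal C}K(t,\tilde t,\theta,\tilde\theta)(v(t,\theta)-v(\tilde t,\tilde\theta))d\tilde\mu+c_{n,\gamma}v(t,\theta)$. 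*)

theory Defs
  imports "HOL-Analysis.Analysis"
begin

text \<open>The cylinder C = R x S^{n-1}, with S^{n-1} the unit sphere of real^'n, n = CARD('n).\<close>

definition cyl :: "(real \<times> (real^'n)) set" where
  "cyl = UNIV \<times> sphere 0 1"

text \<open>Standard surface measure on the unit sphere, via the cone construction:
  sigma(A) = n * Lebesgue measure of {r x. 0 < r <= 1, x in A}, i.e. n times the
  push-forward of Lebesgue measure on the punctured unit ball under x |-> x/|x|.\<close>

definition sphere_measure :: "(real^'n) measure" where
  "sphere_measure = scale_measure (of_nat CARD('n))
     (distr (restrict_space lborel (cball 0 1 - {0})) (restrict_space borel (sphere 0 1)) sgn)"

definition cyl_measure :: "(real \<times> (real^'n)) measure" where
  "cyl_measure = lborel \<Otimes>\<^sub>M sphere_measure"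

definition kernelK :: "real \<Rightarrow> real \<times> (real^'n) \<Rightarrow> real \<times> (real^'n) \<Rightarrow> real" where
  "kernelK \<gamma> z w =
     (let t = fst z; \<theta> = snd z; s = fst w; \<eta> = snd w; a = (real CARD('n) + 2 * \<gamma>) / 2 in
      exp (- a * \<bar>t - s\<bar>) /
      (1 + exp (- 2 * \<bar>t - s\<bar>) - 2 * exp (- \<bar>t - s\<bar>) * (\<theta> \<bullet> \<eta>)) powr a)"

definition varsigma :: "nat \<Rightarrow> real \<Rightarrow> real" where
  "varsigma n \<gamma> = pi powr (- real n / 2) * 2 powr (2 * \<gamma>) *
     (Gamma (real n / 2 + \<gamma>) / Gamma (1 - \<gamma>)) * \<gamma>"

definition cconst :: "nat \<Rightarrow> real \<Rightarrow> real" where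
  "cconst n \<gamma> = 2 powr (2 * \<gamma>) *
     (Gamma ((real n / 2 + \<gamma>) / 2) / Gamma ((real n / 2 - \<gamma>) / 2)) ^ 2"

definition pv_integrand :: "real \<Rightarrow> (real \<times> (real^'n) \<Rightarrow> real) \<Rightarrow> real \<times> (real^'n) \<Rightarrow> real \<times> (real^'n) \<Rightarrow> real" where
  "pv_integrand \<gamma> v z w = kernelK \<gamma> z w * (v z - v w)"

definition pv_trunc :: "real \<Rightarrow> (real \<times> (real^'n) \<Rightarrow> real) \<Rightarrow> real \<times> (real^'n) \<Rightarrow> real \<Rightarrow> real" where
  "pv_trunc \<gamma> v z \<epsilon> =
     set_lebesgue_integral cyl_measure {w. \<epsilon> < dist z w} (pv_integrand \<gamma> v z)"

text \<open>(P_gamma v)(z) is well defined (the P.V. integral exists) and equals L.\<close>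

definition Pgamma_at :: "real \<Rightarrow> (real \<times> (real^'n) \<Rightarrow> real) \<Rightarrow> real \<times> (real^'n) \<Rightarrow> real \<Rightarrow> bool" where
  "Pgamma_at \<gamma> v z L \<longleftrightarrow>
     (\<forall>\<epsilon>>0. set_integrable cyl_measure {w. \<epsilon> < dist z w} (pv_integrand \<gamma> v z)) \<and>
     (\<exists>I. ((\<lambda>\<epsilon>. pv_trunc \<gamma> v z \<epsilon>) \<longlongrightarrow> I) (at_right 0) \<and>
          L = varsigma CARD('n) \<gamma> * I + cconst CARD('n) \<gamma> * v z)"

definition Sigma_lam :: "real \<Rightarrow> (real \<times> (real^'n)) set" where
  "Sigma_lam lam = {z \<in> cyl. fst z < lam}"

definition reflect :: "real \<Rightarrow> real \<times> (real^'n) \<Rightarrow> real \<times> (real^'n)" where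
  "reflect lam z = (2 * lam - fst z, snd z)"

end

theory Submission
  imports Defs
begin


lemma space_sphere_measure: "space (sphere_measure :: (real^'n) measure) = sphere 0 1"
  by (simp add: sphere_measure_def space_restrict_space space_scale_measure)

lemma sets_sphere_measure: "sets (sphere_measure :: (real^'n) measure) = sets (restrict_space borel (sphere 0 1))"
  by (simp add: sphere_measure_def)

lemma emeasure_sphere_measure:
  assumes "A \<in> sets (restrict_space borel (sphere (0::real^'n) 1))"
  shows "emeasure (sphere_measure :: (real^'n) measure) A =
     of_nat CARD('n) * emeasure lborel (sgn -` A \<inter> (cball 0 1 - {0}))"
proof -
  have m: "sgn \<in> measurable (restrict_space lborel (cball (0::real^'n) 1 - {0})) (restrict_space borel (sphere 0 1))"
    by (rule measurable_restrict_space3) (auto simp: norm_sgn)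
  have "emeasure (sphere_measure :: (real^'n) measure) A = of_nat CARD('n) * emeasure (distr (restrict_space lborel (cball 0 1 - {0})) (restrict_space borel (sphere 0 1)) sgn) A"
    unfolding sphere_measure_def by (simp add: emeasure_scale_measure)
  also have "\<dots> = of_nat CARD('n) * emeasure (restrict_space lborel (cball 0 1 - {0})) (sgn -` A \<inter> space (restrict_space lborel (cball (0::real^'n) 1 - {0})))"
    using m assms by (simp add: emeasure_distr)
  also have "\<dots> = of_nat CARD('n) * emeasure lborel (sgn -` A \<inter> (cball 0 1 - {0}))"
  proof -
    have "sgn -` A \<inter> space (restrict_space lborel (cball (0::real^'n) 1 - {0})) \<in> sets (restrict_space lborel (cball (0::real^'n) 1 - {0}))"
      using m assms by (rule measurable_sets)
    then show ?thesis
      by (subst emeasure_restrict_space) (auto simp: space_restrict_space intro!: arg_cong2[where f=emeasure])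
  qed
  finally show ?thesis .
qed

lemma sphere_measure_finite: "emeasure (sphere_measure :: (real^'n) measure) (sphere 0 1) < \<infinity>"
proof -
  have "sphere (0::real^'n) 1 \<in> sets (restrict_space borel (sphere (0::real^'n) 1))"
    using space_restrict_space[of borel "sphere (0::real^'n) 1"]
    by (metis sets.top space_borel inf_top.right_neutral)
  then have "emeasure (sphere_measure :: (real^'n) measure) (sphere 0 1) =
     of_nat CARD('n) * emeasure lborel (sgn -` (sphere 0 1) \<inter> (cball (0::real^'n) 1 - {0}))"
    by (rule emeasure_sphere_measure)
  also have "\<dots> \<le> of_nat CARD('n) * emeasure lborel (cball (0::real^'n) 1)"
    by (intro mult_left_mono emeasure_mono) auto
  also have "\<dots> < \<infinity>"
    using emeasure_lborel_cball_finite[of "0::real^'n" 1]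
    by (simp add: ennreal_mult_less_top of_nat_less_top)
  finally show ?thesis .
qed

lemma finite_measure_sphere_measure: "finite_measure (sphere_measure :: (real^'n) measure)"
  using sphere_measure_finite by (intro finite_measureI) (simp add: space_sphere_measure less_top)

lemma sphere_measure_pos:
  fixes \<theta>1 :: "real^'n"
  assumes "norm \<theta>1 = 1" "\<rho> > 0"
  shows "emeasure (sphere_measure :: (real^'n) measure) (sphere 0 1 \<inter> ball \<theta>1 \<rho>) > 0"
proof -
  define r where "r = min (1/4) (\<rho>/4)"
  have r: "r > 0" "r \<le> 1/4" "4 * r \<le> \<rho>" using assms by (auto simp: r_def)
  have sub: "ball (\<theta>1 /\<^sub>R 2) r \<subseteq> sgn -` (sphere 0 1 \<inter> ball \<theta>1 \<rho>) \<inter> (cball 0 1 - {0})"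
  proof
    fix x assume "x \<in> ball (\<theta>1 /\<^sub>R 2) r"
    then have d: "norm (x - \<theta>1 /\<^sub>R 2) < r" by (simp add: dist_norm norm_minus_commute)
    have n2: "norm (\<theta>1 /\<^sub>R 2) = 1/2" using assms by simp
    have nx1: "\<bar>norm x - 1/2\<bar> < r"
      using norm_triangle_ineq3[of x "\<theta>1 /\<^sub>R 2"] d n2 by linarith
    then have nxpos: "norm x > 0" "norm x \<le> 1" using r by auto
    have "sgn x - \<theta>1 = (inverse (norm x) - 2) *\<^sub>R x + 2 *\<^sub>R (x - \<theta>1 /\<^sub>R 2)"
      by (simp add: sgn_div_norm algebra_simps)
    then have "norm (sgn x - \<theta>1) \<le> norm ((inverse (norm x) - 2) *\<^sub>R x) + 2 * norm (x - \<theta>1 /\<^sub>R 2)"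
      by (metis norm_triangle_ineq norm_scaleR abs_numeral)
    also have "norm ((inverse (norm x) - 2) *\<^sub>R x) = \<bar>1 - 2 * norm x\<bar>"
    proof -
      have "norm ((inverse (norm x) - 2) *\<^sub>R x) = \<bar>inverse (norm x) - 2\<bar> * norm x" by simp
      also have "\<dots> = \<bar>(inverse (norm x) - 2) * norm x\<bar>" using nxpos by (simp add: abs_mult)
      also have "(inverse (norm x) - 2) * norm x = 1 - 2 * norm x" using nxpos by (simp add: left_diff_distrib)
      finally show ?thesis .
    qed
    finally have "norm (sgn x - \<theta>1) < \<rho>" using nx1 d r by linarith
    then show "x \<in> sgn -` (sphere 0 1 \<inter> ball \<theta>1 \<rho>) \<inter> (cball 0 1 - {0})"
      using nxpos by (auto simp: norm_sgn dist_norm norm_minus_commute)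
  qed
  have A: "sphere 0 1 \<inter> ball \<theta>1 \<rho> \<in> sets (restrict_space borel (sphere (0::real^'n) 1))"
    by (auto simp: sets_restrict_space)
  have "0 < emeasure lborel (ball (\<theta>1 /\<^sub>R 2) r)"
    using content_ball_pos[OF r(1), of "\<theta>1 /\<^sub>R 2"]
    by (metis Sigma_Algebra.measure_def enn2real_0 less_irrefl not_gr_zero)
  also have "\<dots> \<le> emeasure lborel (sgn -` (sphere 0 1 \<inter> ball \<theta>1 \<rho>) \<inter> (cball 0 1 - {0}))"
  proof (intro emeasure_mono sub)
    have "sgn -` (sphere 0 1 \<inter> ball \<theta>1 \<rho>) \<in> sets (borel :: (real^'n) measure)"
      using measurable_sets[OF borel_measurable_sgn, of "sphere 0 1 \<inter> ball \<theta>1 \<rho>"] by auto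
    then show "sgn -` (sphere 0 1 \<inter> ball \<theta>1 \<rho>) \<inter> (cball 0 1 - {0}) \<in> sets lborel"
      by auto
  qed
  finally have "0 < emeasure lborel (sgn -` (sphere 0 1 \<inter> ball \<theta>1 \<rho>) \<inter> (cball (0::real^'n) 1 - {0}))" .
  then show ?thesis
    by (subst emeasure_sphere_measure[OF A]) (simp add: ennreal_zero_less_mult_iff)
qed



interpretation sph: finite_measure "sphere_measure :: (real^'n) measure"
  by (rule finite_measure_sphere_measure)

lemma space_cyl_measure: "space (cyl_measure :: (real \<times> (real^'n)) measure) = UNIV \<times> sphere 0 1"
  by (simp add: cyl_measure_def space_pair_measure space_sphere_measure)

lemma sets_cyl_measure_eq: "sets (cyl_measure :: (real \<times> (real^'n)) measure) = sets (lborel \<Otimes>\<^sub>M (sphere_measure :: (real^'n) measure))"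
  unfolding cyl_measure_def by (rule refl)

lemma emeasure_cyl_Times:
  assumes "A \<in> sets borel" "B \<in> sets (sphere_measure :: (real^'n) measure)"
  shows "emeasure (cyl_measure :: (real \<times> (real^'n)) measure) (A \<times> B) = emeasure lborel A * emeasure sphere_measure B"
  unfolding cyl_measure_def using assms by (intro sph.emeasure_pair_measure_Times) auto

lemma reflect_line: "distr lborel lborel (\<lambda>t::real. 2 * lam - t) = lborel"
proof -
  have "distr lborel lborel (\<lambda>t::real. 2 * lam - t) = distr lborel borel ((+) (2*lam) \<circ> uminus)"
    by (intro distr_cong) (auto simp: o_def)
  also have "\<dots> = distr (distr lborel borel uminus) borel ((+) (2*lam))"
    by (subst distr_distr) auto
  also have "\<dots> = lborel" by (simp add: lborel_distr_uminus lborel_distr_plus)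
  finally show ?thesis .
qed

lemma reflect_measurable: "reflect lam \<in> measurable (cyl_measure :: (real \<times> (real^'n)) measure) cyl_measure"
  unfolding reflect_def cyl_measure_def by measurable

lemma distr_reflect: "distr (cyl_measure :: (real \<times> (real^'n)) measure) cyl_measure (reflect lam) = cyl_measure"
proof -
  have "(cyl_measure :: (real \<times> (real^'n)) measure) = distr lborel lborel (\<lambda>t::real. 2 * lam - t) \<Otimes>\<^sub>M distr sphere_measure sphere_measure (\<lambda>x. x)"
    by (simp add: reflect_line cyl_measure_def distr_id)
  also have "\<dots> = distr (lborel \<Otimes>\<^sub>M sphere_measure) (lborel \<Otimes>\<^sub>M sphere_measure) (\<lambda>(x, y). (2 * lam - x, y))"
    by (rule pair_measure_distr) (auto simp: distr_id intro: sph.sigma_finite_measure_axioms)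
  also have "\<dots> = distr (cyl_measure :: (real \<times> (real^'n)) measure) cyl_measure (reflect lam)"
    unfolding cyl_measure_def by (intro distr_cong) (auto simp: reflect_def)
  finally show ?thesis by simp
qed



definition kk :: "real \<Rightarrow> real \<Rightarrow> real \<Rightarrow> real" where
  "kk a r c = exp (- a * r) / (1 + exp (- 2 * r) - 2 * exp (- r) * c) powr a"

definition DD :: "real \<Rightarrow> real \<Rightarrow> real" where
  "DD r c = exp r + exp (- r) - 2 * c"

lemma kernelK_kk: "kernelK \<gamma> z w = kk ((real CARD('n) + 2 * \<gamma>) / 2) \<bar>fst z - fst w\<bar> (snd z \<bullet> (snd w :: real^'n))"
  by (simp add: kernelK_def kk_def Let_def)

lemma kk_nonneg: "kk a r c \<ge> 0"
  by (simp add: kk_def)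

lemma kk_DD:
  assumes "DD r c > 0"
  shows "kk a r c = DD r c powr (- a)"
proof -
  have e: "1 + exp (- 2 * r) - 2 * exp (- r) * c = exp (- r) * DD r c"
    by (simp add: DD_def algebra_simps flip: exp_add)
  have "(exp (- r) * DD r c) powr a = exp (- r) powr a * DD r c powr a"
    using assms by (simp add: powr_mult)
  also have "exp (- r) powr a = exp (- a * r)" by (simp add: powr_def)
  finally have "(exp (- r) * DD r c) powr a = exp (- a * r) * DD r c powr a" .
  then have "(1 + exp (- 2 * r) - 2 * exp (- r) * c) powr a = exp (- a * r) * DD r c powr a"
    by (simp only: e)
  then show ?thesis using assms by (simp add: kk_def powr_minus divide_inverse)
qed

lemma cosh_mono_aux:
  fixes r1 r2 :: real
  assumes "0 \<le> r1" "r1 \<le> r2"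
  shows "exp r1 + exp (- r1) \<le> exp r2 + exp (- r2)"
    and "r1 < r2 \<Longrightarrow> 0 < r1 + r2 \<Longrightarrow> exp r1 + exp (- r1) < exp r2 + exp (- r2)"
proof -
  have id: "exp r2 + exp (- r2) - (exp r1 + exp (- r1)) = (exp r2 - exp r1) * (1 - exp (- r1 - r2))"
  proof -
    have e1: "exp r2 * exp (- r1 - r2) = exp (- r1)" by (simp add: mult_exp_exp)
    have e2: "exp r1 * exp (- r1 - r2) = exp (- r2)" by (simp add: mult_exp_exp)
    have "(exp r2 - exp r1) * (1 - exp (- r1 - r2)) = exp r2 - exp r2 * exp (- r1 - r2) - exp r1 + exp r1 * exp (- r1 - r2)"
      by algebra
    then show ?thesis using e1 e2 by linarith
  qed
  have "exp r2 - exp r1 \<ge> 0" using assms by simp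
  moreover have "1 - exp (- r1 - r2) \<ge> 0" using assms by simp
  ultimately show "exp r1 + exp (- r1) \<le> exp r2 + exp (- r2)"
    using id by (metis diff_ge_0_iff_ge mult_nonneg_nonneg)
  assume "r1 < r2" "0 < r1 + r2"
  then have "exp r2 - exp r1 > 0" "1 - exp (- r1 - r2) > 0" by auto
  then show "exp r1 + exp (- r1) < exp r2 + exp (- r2)"
    using id by (metis diff_gt_0_iff_gt mult_pos_pos)
qed

lemma DD_pos:
  assumes "0 \<le> r" "c \<le> 1" "0 < r \<or> c < 1"
  shows "DD r c > 0"
proof (cases "0 < r")
  case True
  have "exp 0 + exp (- 0) < exp r + exp (- r)"
    using cosh_mono_aux(2)[of 0 r] True by simp
  then show ?thesis using assms by (simp add: DD_def)
next
  case False
  then have "r = 0" using assms by simp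
  then show ?thesis using assms False by (simp add: DD_def)
qed

lemma kk_anti:
  assumes "0 \<le> r1" "r1 \<le> r2" "c \<le> 1" "0 < r1 \<or> c < 1" "a > 0"
  shows "kk a r2 c \<le> kk a r1 c"
    and "r1 < r2 \<Longrightarrow> kk a r2 c < kk a r1 c"
proof -
  have p1: "DD r1 c > 0" using DD_pos assms by blast
  have le: "DD r1 c \<le> DD r2 c" using cosh_mono_aux(1)[OF assms(1,2)] by (simp add: DD_def)
  then have p2: "DD r2 c > 0" using p1 by linarith
  show "kk a r2 c \<le> kk a r1 c"
    using p1 p2 le assms by (simp add: kk_DD powr_mono2')
  assume "r1 < r2"
  then have "0 < r1 + r2" using assms by linarith
  then have "DD r1 c < DD r2 c" using cosh_mono_aux(2)[OF assms(1,2) \<open>r1 < r2\<close>] by (simp add: DD_def)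
  then show "kk a r2 c < kk a r1 c"
    using p1 p2 assms by (simp add: kk_DD powr_less_mono2_neg)
qed

lemma kk_bound:
  assumes "0 < \<eta>" "\<eta> \<le> r" "c \<le> 1" "a > 0"
  shows "kk a r c \<le> DD \<eta> 1 powr (- a)"
proof -
  have "kk a r c \<le> kk a \<eta> c" using kk_anti(1)[of \<eta> r c a] assms by auto
  also have "kk a \<eta> c = DD \<eta> c powr (- a)" using DD_pos[of \<eta> c] assms by (simp add: kk_DD)
  also have "\<dots> \<le> DD \<eta> 1 powr (- a)"
    using DD_pos[of \<eta> 1] assms by (intro powr_mono2') (auto simp: DD_def)
  finally show ?thesis .
qed

lemma unit_inner_le: "norm (x::real^'n) = 1 \<Longrightarrow> norm y = 1 \<Longrightarrow> x \<bullet> y \<le> 1"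
  by (metis Cauchy_Schwarz_ineq2 abs_le_D1 mult_1)

lemma unit_inner_eq: "norm (x::real^'n) = 1 \<Longrightarrow> norm y = 1 \<Longrightarrow> x \<bullet> y = 1 \<Longrightarrow> x = y"
proof -
  assume a: "norm x = 1" "norm y = 1" "x \<bullet> y = 1"
  have "norm (x - y)^2 = norm x ^2 + norm y ^2 - 2 * (x \<bullet> y)"
    by (simp add: power2_norm_eq_inner inner_diff algebra_simps inner_commute)
  then have "norm (x - y) = 0" using a by simp
  then show "x = y" by simp
qed



lemma sph_sets: "sphere 0 1 \<in> sets (sphere_measure :: (real^'n) measure)"
  using sets.top[of "sphere_measure :: (real^'n) measure"] by (simp add: space_sphere_measure)

lemma cyl_Times_sets:
  assumes "A \<in> sets borel" "B \<in> sets (sphere_measure :: (real^'n) measure)"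
  shows "A \<times> B \<in> sets (cyl_measure :: (real \<times> (real^'n)) measure)"
  unfolding cyl_measure_def using assms by (intro pair_measureI) auto

lemma pw:
  fixes \<epsilon> \<epsilon>0 d d2 r K1 K2 MK V Vb :: real
  assumes "0 < \<epsilon>" "\<epsilon> \<le> \<epsilon>0" "\<epsilon>0 \<le> 1" "d \<le> d2" "r \<le> d" "0 \<le> r"
    "0 < d \<Longrightarrow> K2 \<le> K1" "K2 \<le> MK" "0 \<le> K2" "0 \<le> K1" "0 \<le> V" "r \<le> 1 \<Longrightarrow> V \<le> Vb" "0 \<le> Vb"
  shows "(if \<epsilon>0 < r then ((if \<epsilon>0 < d then 1 else 0) * K1 - (if \<epsilon>0 < d2 then 1 else 0) * K2) * V else 0)
     - MK * Vb * (if r \<le> \<epsilon> then 1 else 0)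
     \<le> ((if \<epsilon> < d then 1 else 0) * K1 - (if \<epsilon> < d2 then 1 else 0) * K2) * V"
proof (cases "\<epsilon> < d")
  case True
  then have "0 < d" using assms by linarith
  then have k: "K2 \<le> K1" using assms by blast
  have i2: "\<epsilon> < d2" using True assms by linarith
  have "0 \<le> MK * Vb" using assms by (intro mult_nonneg_nonneg) linarith+
  moreover have "0 \<le> (K1 - K2) * V" using k assms by (intro mult_nonneg_nonneg) linarith+
  moreover have "\<epsilon>0 < r \<Longrightarrow> \<epsilon>0 < d \<and> \<epsilon>0 < d2" using assms by linarith
  ultimately show ?thesis using True i2 by auto
next
  case False
  then have rle: "r \<le> \<epsilon>" "\<not> \<epsilon>0 < r" using assms by linarith+
  have "V \<le> Vb" using assms rle by linarith
  have "K2 * V \<le> MK * Vb" using assms \<open>V \<le> Vb\<close> by (intro mult_mono) linarith+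
  moreover have "0 \<le> K2 * V" using assms by simp
  ultimately show ?thesis using False rle by auto
qed



theorem lemma5p2:
  fixes v :: "real \<times> (real^'n) \<Rightarrow> real" and f :: "real \<Rightarrow> real"
    and \<gamma> lam :: real
  assumes "CARD('n) \<ge> 2"
    and "0 < \<gamma>" and "\<gamma> < 1"
    and "\<And>s. s \<ge> 0 \<Longrightarrow> f s \<ge> 0"
    and "continuous_on cyl v"
    and "\<And>z. z \<in> Sigma_lam lam \<Longrightarrow> Pgamma_at \<gamma> v z (f (v z))"
    and "\<And>z. z \<in> Sigma_lam lam \<Longrightarrow> v z \<ge> 0"
    and "\<And>z. z \<in> cyl \<Longrightarrow> v (reflect lam z) = - v z"
  shows "(\<forall>z\<in>cyl. v z = 0) \<or> (\<forall>z\<in>Sigma_lam lam. v z > 0)"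
proof (rule ccontr)
  assume H: "\<not> ((\<forall>z\<in>cyl. v z = 0) \<or> (\<forall>z\<in>Sigma_lam lam. v z > 0))"
  let ?M = "cyl_measure :: (real \<times> (real^'n)) measure"
  let ?R = "reflect lam :: real \<times> (real^'n) \<Rightarrow> _"
  have cyl_iff: "\<And>z::real \<times> (real^'n). z \<in> cyl \<longleftrightarrow> norm (snd z) = 1"
    by (auto simp: cyl_def)
  have Sig_iff: "\<And>z. z \<in> Sigma_lam lam \<longleftrightarrow> z \<in> cyl \<and> fst z < lam"
    by (simp add: Sigma_lam_def)
  have spaceM: "\<And>z. z \<in> space ?M \<longleftrightarrow> z \<in> cyl"
    by (auto simp: space_cyl_measure cyl_def)
  have R_cyl: "\<And>z. z \<in> cyl \<Longrightarrow> ?R z \<in> cyl" by (auto simp: reflect_def cyl_def)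
  have vle: "\<And>u. u \<in> cyl \<Longrightarrow> fst u \<le> lam \<Longrightarrow> v u \<ge> 0"
  proof -
    fix u :: "real \<times> (real^'n)" assume u: "u \<in> cyl" "fst u \<le> lam"
    show "v u \<ge> 0"
    proof (cases "fst u < lam")
      case True then show ?thesis using assms(7) u Sig_iff by blast
    next
      case False
      then have "?R u = u" using u by (cases u) (auto simp: reflect_def)
      then have "v u = - v u" using assms(8)[OF u(1)] by simp
      then show ?thesis by simp
    qed
  qed
  obtain z0 where z0: "z0 \<in> Sigma_lam lam" "v z0 = 0"
  proof -
    obtain z where "z \<in> Sigma_lam lam" "\<not> v z > 0" using H by blast
    moreover from this have "v z = 0" using assms(7)[of z] by linarith
    ultimately show ?thesis using that by blast
  qed
  obtain z1 where z1: "z1 \<in> Sigma_lam lam" "v z1 > 0"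
  proof -
    obtain z where z: "z \<in> cyl" "v z \<noteq> 0" using H by blast
    consider "fst z < lam" | "fst z = lam" | "fst z > lam" by linarith
    then show ?thesis
    proof cases
      case 1
      then have zs: "z \<in> Sigma_lam lam" using z Sig_iff by blast
      then have "v z > 0" using assms(7)[OF zs] z(2) by linarith
      then show ?thesis using that zs by blast
    next
      case 2
      then have "?R z = z" by (cases z) (auto simp: reflect_def)
      then show ?thesis using assms(8)[OF z(1)] z by simp
    next
      case 3
      have "?R z \<in> Sigma_lam lam" using R_cyl[OF z(1)] 3 by (simp add: Sigma_lam_def reflect_def)
      moreover have "v (?R z) > 0"
        using assms(7)[OF calculation] assms(8)[OF z(1)] z(2) by simp
      ultimately show ?thesis using that by blast
    qed
  qed
  obtain t0 \<theta>0 where z0eq: "z0 = (t0, \<theta>0)" by (cases z0)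
  obtain s1 \<theta>1 where z1eq: "z1 = (s1, \<theta>1)" by (cases z1)
  have t0: "t0 < lam" "norm \<theta>0 = 1" using z0 z0eq by (auto simp: Sigma_lam_def cyl_def)
  have s1: "s1 < lam" "norm \<theta>1 = 1" using z1 z1eq by (auto simp: Sigma_lam_def cyl_def)
  define a where "a = (real CARD('n) + 2 * \<gamma>) / 2"
  have apos: "a > 0" using assms(2) by (simp add: a_def)
  define K where "K = (\<lambda>u::real \<times> (real^'n). kernelK \<gamma> z0 u)"
  have Kkk: "\<And>u. K u = kk a \<bar>t0 - fst u\<bar> (\<theta>0 \<bullet> snd u)"
    by (simp add: K_def kernelK_kk a_def z0eq)
  define \<eta> where "\<eta> = lam - t0"
  have \<eta>pos: "\<eta> > 0" using t0 by (simp add: \<eta>_def)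
  define MK where "MK = DD \<eta> 1 powr (- a)"
  have MKnn: "MK \<ge> 0" by (simp add: MK_def)
  obtain \<rho>0 where \<rho>0: "\<rho>0 > 0" "\<And>u. u \<in> cyl \<Longrightarrow> dist u z1 < \<rho>0 \<Longrightarrow> v u > 0"
  proof -
    have "z1 \<in> cyl" using z1 Sig_iff by blast
    then obtain d where d: "d > 0" "\<And>u. u \<in> cyl \<Longrightarrow> dist u z1 < d \<Longrightarrow> dist (v u) (v z1) < v z1"
      using assms(5) z1(2) unfolding continuous_on_iff by metis
    have "\<And>u. u \<in> cyl \<Longrightarrow> dist u z1 < d \<Longrightarrow> v u > 0"
      using d(2) by (fastforce simp: dist_real_def)
    then show ?thesis using that d(1) by blast
  qed
  obtain Vb where Vb: "Vb \<ge> 0" "\<And>u. u \<in> cyl \<Longrightarrow> \<bar>fst u - t0\<bar> \<le> 1 \<Longrightarrow> v u \<le> Vb"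
  proof -
    let ?C = "{t0 - 1..t0 + 1} \<times> sphere (0::real^'n) 1"
    have cC: "compact ?C" by (intro compact_Times compact_Icc compact_sphere)
    have sub: "?C \<subseteq> cyl" by (auto simp: cyl_def)
    have "compact (v ` ?C)"
      by (rule compact_continuous_image[OF continuous_on_subset[OF assms(5) sub] cC])
    then obtain B where B: "\<And>x. x \<in> v ` ?C \<Longrightarrow> norm x \<le> B"
      using compact_imp_bounded bounded_iff by metis
    have bnd: "\<And>u. u \<in> cyl \<Longrightarrow> \<bar>fst u - t0\<bar> \<le> 1 \<Longrightarrow> v u \<le> max B 0"
    proof -
      fix u :: "real \<times> (real^'n)" assume u: "u \<in> cyl" "\<bar>fst u - t0\<bar> \<le> 1"
      then have "u \<in> ?C" by (cases u) (auto simp: cyl_def)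
      then have "norm (v u) \<le> B" using B by blast
      then show "v u \<le> max B 0" by simp
    qed
    show ?thesis by (rule that[of "max B 0"]) (simp_all add: bnd)
  qed
  have Pz0: "Pgamma_at \<gamma> v z0 (f (v z0))" using assms(6) z0(1) .
  then have intS: "\<And>\<epsilon>. \<epsilon> > 0 \<Longrightarrow> set_integrable ?M {w. \<epsilon> < dist z0 w} (pv_integrand \<gamma> v z0)"
    unfolding Pgamma_at_def by blast
  obtain I where I: "((\<lambda>\<epsilon>. pv_trunc \<gamma> v z0 \<epsilon>) \<longlongrightarrow> I) (at_right 0)"
    "f (v z0) = varsigma CARD('n) \<gamma> * I + cconst CARD('n) \<gamma> * v z0"
    using Pz0 unfolding Pgamma_at_def by blast
  have vs: "varsigma CARD('n) \<gamma> > 0"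
    using assms(2,3) unfolding varsigma_def
    by (intro mult_pos_pos divide_pos_pos Gamma_real_pos) auto
  have Inn: "I \<ge> 0"
  proof -
    have "0 \<le> f 0" using assms(4) by simp
    then have "0 \<le> varsigma CARD('n) \<gamma> * I" using I(2) z0(2) by simp
    then show ?thesis using vs by (simp add: zero_le_mult_iff)
  qed
  define h where "h = (\<lambda>\<epsilon> w. indicator {w. \<epsilon> < dist z0 w} w * (K w * v w))"
  have hfun: "\<And>\<epsilon>. (\<lambda>w. indicator {w. \<epsilon> < dist z0 w} w *\<^sub>R pv_integrand \<gamma> v z0 w) = (\<lambda>w. - h \<epsilon> w)"
    by (auto simp: h_def pv_integrand_def K_def z0(2) fun_eq_iff)
  have h_int: "\<And>\<epsilon>. \<epsilon> > 0 \<Longrightarrow> integrable ?M (h \<epsilon>)"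
  proof -
    fix \<epsilon> :: real assume "\<epsilon> > 0"
    from intS[OF this] have "integrable ?M (\<lambda>w. - h \<epsilon> w)"
      unfolding set_integrable_def hfun .
    then show "integrable ?M (h \<epsilon>)" by simp
  qed
  have h_lim: "((\<lambda>\<epsilon>. integral\<^sup>L ?M (h \<epsilon>)) \<longlongrightarrow> - I) (at_right 0)"
  proof -
    have "\<And>\<epsilon>. pv_trunc \<gamma> v z0 \<epsilon> = - integral\<^sup>L ?M (h \<epsilon>)"
      unfolding pv_trunc_def set_lebesgue_integral_def hfun by simp
    then have "(\<lambda>\<epsilon>. integral\<^sup>L ?M (h \<epsilon>)) = (\<lambda>\<epsilon>. - pv_trunc \<gamma> v z0 \<epsilon>)" by (simp add: fun_eq_iff)
    then show ?thesis using tendsto_minus[OF I(1)] by simp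
  qed
  define SA where "SA = {..<lam} \<times> sphere (0::real^'n) 1"
  define SB where "SB = {lam..} \<times> sphere (0::real^'n) 1"
  have SAs: "SA \<in> sets ?M" unfolding SA_def by (intro cyl_Times_sets sph_sets) auto
  have SBs: "SB \<in> sets ?M" unfolding SB_def by (intro cyl_Times_sets sph_sets) auto
  define G where "G = (\<lambda>\<epsilon> u. indicator SA u * ((indicator {w. \<epsilon> < dist z0 w} u * K u
      - indicator {w. \<epsilon> < dist z0 (?R w)} u * K (?R u)) * v u))"
  have G_int: "integrable ?M (G \<epsilon>) \<and> integral\<^sup>L ?M (G \<epsilon>) = integral\<^sup>L ?M (h \<epsilon>)" if "\<epsilon> > 0" for \<epsilon>
  proof -
    have hi: "integrable ?M (h \<epsilon>)" using h_int that .
    have hAi: "integrable ?M (\<lambda>u. indicator SA u * h \<epsilon> u)"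
      using integrable_mult_indicator[OF SAs hi] by simp
    have hBi: "integrable ?M (\<lambda>u. indicator SB u * h \<epsilon> u)"
      using integrable_mult_indicator[OF SBs hi] by simp
    have hBm: "(\<lambda>u. indicator SB u * h \<epsilon> u) \<in> borel_measurable ?M"
      using borel_measurable_integrable[OF hBi] .
    have hBRi: "integrable ?M (\<lambda>u. indicator SB (?R u) * h \<epsilon> (?R u))"
      using integrable_distr_eq[OF reflect_measurable[of lam] hBm] hBi unfolding distr_reflect by blast
    have hBR: "integral\<^sup>L ?M (\<lambda>u. indicator SB u * h \<epsilon> u) = integral\<^sup>L ?M (\<lambda>u. indicator SB (?R u) * h \<epsilon> (?R u))"
      using integral_distr[OF reflect_measurable[of lam] hBm] unfolding distr_reflect by simp
    define g2 where "g2 = (\<lambda>u. indicator SA u * (indicator {w. \<epsilon> < dist z0 (?R w)} u * K (?R u) * v u))"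
    have pt: "indicator SB (?R u) * h \<epsilon> (?R u) = - g2 u" if u: "u \<in> space ?M" for u
    proof -
      obtain s \<theta> where ueq: "u = (s, \<theta>)" by (cases u)
      have uc: "u \<in> cyl" using u spaceM by blast
      then have th: "norm \<theta> = 1" using ueq by (simp add: cyl_def)
      have vR: "v (?R u) = - v u" using assms(8)[OF uc] .
      consider "s < lam" | "s = lam" | "s > lam" by linarith
      then show ?thesis
      proof cases
        case 1
        then show ?thesis using th vR
          by (simp add: ueq SA_def SB_def g2_def h_def reflect_def indicator_def)
      next
        case 2
        then have "?R u = u" by (simp add: ueq reflect_def)
        then have "v u = 0" using vR by simp
        then show ?thesis using \<open>?R u = u\<close> by (simp add: g2_def h_def)
      next
        case 3
        then show ?thesis by (simp add: ueq SA_def SB_def g2_def reflect_def indicator_def)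
      qed
    qed
    have g2i: "integrable ?M g2"
    proof -
      have "integrable ?M (\<lambda>u. - g2 u)"
        using hBRi by (subst Bochner_Integration.integrable_cong[OF refl pt, symmetric]) auto
      then show ?thesis by simp
    qed
    have g2I: "integral\<^sup>L ?M g2 = - integral\<^sup>L ?M (\<lambda>u. indicator SB u * h \<epsilon> u)"
    proof -
      have "integral\<^sup>L ?M (\<lambda>u. indicator SB (?R u) * h \<epsilon> (?R u)) = integral\<^sup>L ?M (\<lambda>u. - g2 u)"
        by (rule Bochner_Integration.integral_cong[OF refl pt])
      then show ?thesis using hBR by simp
    qed
    have Geq: "G \<epsilon> = (\<lambda>u. indicator SA u * h \<epsilon> u - g2 u)"
      by (simp add: G_def g2_def h_def fun_eq_iff algebra_simps)
    have Gi: "integrable ?M (G \<epsilon>)" unfolding Geq using hAi g2i by simp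
    have "integral\<^sup>L ?M (G \<epsilon>) = integral\<^sup>L ?M (\<lambda>u. indicator SA u * h \<epsilon> u) + integral\<^sup>L ?M (\<lambda>u. indicator SB u * h \<epsilon> u)"
      unfolding Geq using hAi g2i g2I by simp
    also have "\<dots> = integral\<^sup>L ?M (\<lambda>u. indicator SA u * h \<epsilon> u + indicator SB u * h \<epsilon> u)"
      using hAi hBi by simp
    also have "\<dots> = integral\<^sup>L ?M (h \<epsilon>)"
    proof (rule Bochner_Integration.integral_cong[OF refl])
      fix u assume "u \<in> space ?M"
      then have "snd u \<in> sphere 0 1" by (cases u) (simp add: space_cyl_measure)
      then show "indicator SA u * h \<epsilon> u + indicator SB u * h \<epsilon> u = h \<epsilon> u"
        by (cases u) (auto simp: SA_def SB_def indicator_def)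
    qed
    finally show ?thesis using Gi by simp
  qed
  have kfacts: "dist z0 u \<le> dist z0 (?R u) \<and> \<bar>fst u - t0\<bar> \<le> dist z0 u \<and> 0 \<le> K u \<and> 0 \<le> K (?R u)
      \<and> K (?R u) \<le> MK \<and> (0 < dist z0 u \<longrightarrow> K (?R u) \<le> K u) \<and> (0 < \<bar>fst u - t0\<bar> \<longrightarrow> K (?R u) < K u)"
    if u: "u \<in> cyl" "fst u < lam" for u
  proof -
    obtain s \<theta> where ueq: "u = (s, \<theta>)" by (cases u)
    have th: "norm \<theta> = 1" using u ueq by (simp add: cyl_def)
    have s: "s < lam" using u ueq by simp
    define r1 where "r1 = \<bar>t0 - s\<bar>"
    define r2 where "r2 = \<bar>t0 - (2 * lam - s)\<bar>"
    define c where "c = \<theta>0 \<bullet> \<theta>"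
    have c1: "c \<le> 1" using unit_inner_le[OF t0(2) th] by (simp add: c_def)
    have r2eq: "r2 = 2 * lam - t0 - s" using s t0 by (simp add: r2_def)
    have r12: "r1 < r2" using s t0 by (simp add: r1_def r2eq abs_if)
    have r2\<eta>: "\<eta> \<le> r2" using s by (simp add: r2eq \<eta>_def)
    have KU: "K u = kk a r1 c" by (simp add: Kkk ueq r1_def c_def)
    have KR: "K (?R u) = kk a r2 c" by (simp add: Kkk ueq r2_def c_def reflect_def)
    have d1: "dist z0 u = sqrt (r1^2 + (dist \<theta>0 \<theta>)^2)"
      by (simp add: z0eq ueq dist_Pair_Pair r1_def dist_real_def)
    have d2: "dist z0 (?R u) = sqrt (r2^2 + (dist \<theta>0 \<theta>)^2)"
      by (simp add: z0eq ueq dist_Pair_Pair r2_def dist_real_def reflect_def)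
    have "r1^2 \<le> r2^2" using r12 by (intro power_mono) (auto simp: r1_def)
    then have A1: "dist z0 u \<le> dist z0 (?R u)" unfolding d1 d2 by simp
    have A2: "\<bar>fst u - t0\<bar> \<le> dist z0 u"
      unfolding d1 using real_sqrt_sum_squares_ge1[of r1 "dist \<theta>0 \<theta>"] by (simp add: ueq r1_def abs_minus_commute)
    have A5: "K (?R u) \<le> MK" unfolding KR MK_def using kk_bound[OF \<eta>pos r2\<eta> c1 apos] .
    have A6: "K (?R u) \<le> K u" if "0 < dist z0 u"
    proof -
      have "0 < r1 \<or> c < 1"
      proof (rule ccontr)
        assume "\<not> (0 < r1 \<or> c < 1)"
        then have "r1 = 0" "c = 1" using c1 by (auto simp: r1_def)
        then have "s = t0" "\<theta>0 = \<theta>" using unit_inner_eq[OF t0(2) th] by (auto simp: r1_def c_def)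
        then show False using that by (simp add: z0eq ueq)
      qed
      then show ?thesis unfolding KU KR using kk_anti(1)[of r1 r2 c a] r12 c1 apos by (auto simp: r1_def)
    qed
    have A7: "K (?R u) < K u" if "0 < \<bar>fst u - t0\<bar>"
    proof -
      have "0 < r1" using that by (simp add: r1_def ueq abs_minus_commute)
      then show ?thesis unfolding KU KR using kk_anti(2)[of r1 r2 c a] r12 c1 apos by auto
    qed
    show ?thesis using A1 A2 A5 A6 A7 by (simp add: K_def kk_nonneg kernelK_kk)
  qed
  define \<rho> where "\<rho> = min (\<rho>0 / 2) ((lam - s1) / 2)"
  have \<rho>pos: "\<rho> > 0" using \<rho>0(1) s1(1) by (simp add: \<rho>_def)
  define \<epsilon>0 where "\<epsilon>0 = min (\<rho> / 4) 1"
  have \<epsilon>0: "0 < \<epsilon>0" "\<epsilon>0 \<le> 1" "\<epsilon>0 \<le> \<rho> / 4" using \<rho>pos by (auto simp: \<epsilon>0_def)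
  define cc where "cc = (if s1 \<le> t0 then s1 - \<rho> else s1 + \<rho> / 2)"
  define Iv where "Iv = {cc <..< cc + \<rho> / 2}"
  have Ivp: "\<bar>s - s1\<bar> < \<rho> \<and> \<epsilon>0 < \<bar>s - t0\<bar> \<and> s < lam" if "s \<in> Iv" for s
  proof (cases "s1 \<le> t0")
    case True
    then show ?thesis using that \<epsilon>0 \<rho>pos s1 by (auto simp: Iv_def cc_def abs_if)
  next
    case False
    have "\<rho> \<le> (lam - s1) / 2" unfolding \<rho>_def by (rule min.cobounded2)
    then show ?thesis using False that \<epsilon>0 \<rho>pos s1 by (auto simp: Iv_def cc_def abs_if)
  qed
  define U where "U = Iv \<times> (sphere 0 1 \<inter> ball \<theta>1 \<rho>)"
  have Us: "U \<in> sets ?M" unfolding U_def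
    by (intro cyl_Times_sets) (auto simp: Iv_def sets_sphere_measure sets_restrict_space)
  have Upos: "emeasure ?M U > 0"
  proof -
    have "emeasure ?M U = emeasure lborel Iv * emeasure sphere_measure (sphere 0 1 \<inter> ball \<theta>1 \<rho>)"
      unfolding U_def by (intro emeasure_cyl_Times) (auto simp: Iv_def sets_sphere_measure sets_restrict_space)
    moreover have "emeasure lborel Iv > 0" using \<rho>pos by (simp add: Iv_def)
    moreover have "emeasure (sphere_measure :: (real^'n) measure) (sphere 0 1 \<inter> ball \<theta>1 \<rho>) > 0"
      by (rule sphere_measure_pos[OF s1(2) \<rho>pos])
    ultimately show ?thesis by (simp add: ennreal_zero_less_mult_iff)
  qed
  have Uv: "u \<in> cyl \<and> v u > 0 \<and> fst u < lam \<and> \<epsilon>0 < \<bar>fst u - t0\<bar>" if "u \<in> U" for u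
  proof -
    obtain s \<theta> where ueq: "u = (s, \<theta>)" by (cases u)
    have s: "s \<in> Iv" and th: "norm \<theta> = 1" "dist \<theta>1 \<theta> < \<rho>" using that by (auto simp: U_def ueq)
    have uc: "u \<in> cyl" using th by (simp add: cyl_def ueq)
    have "dist u z1 \<le> dist u (s1, \<theta>) + dist (s1, \<theta>) z1" by (rule dist_triangle)
    also have "dist u (s1, \<theta>) = \<bar>s - s1\<bar>" by (simp add: ueq dist_Pair_Pair dist_real_def)
    also have "dist (s1, \<theta>) z1 = dist \<theta>1 \<theta>" by (simp add: z1eq dist_Pair_Pair dist_commute)
    finally have "dist u z1 < 2 * \<rho>" using Ivp[OF s] th by linarith
    also have "2 * \<rho> \<le> \<rho>0" using min.cobounded1[of "\<rho>0 / 2" "(lam - s1) / 2"] unfolding \<rho>_def by linarith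
    finally have "v u > 0" using \<rho>0(2)[OF uc] by blast
    then show ?thesis using uc Ivp[OF s] by (simp add: ueq)
  qed
  define Bp where "Bp = ({..<lam} - {t0 - \<epsilon>0..t0 + \<epsilon>0}) \<times> sphere (0::real^'n) 1"
  have Bps: "Bp \<in> sets ?M" unfolding Bp_def by (intro cyl_Times_sets sph_sets) auto
  define P where "P = (\<lambda>u. indicator Bp u * G \<epsilon>0 u)"
  have Bp_iff: "u \<in> Bp \<longleftrightarrow> fst u < lam \<and> \<epsilon>0 < \<bar>fst u - t0\<bar>" if "u \<in> cyl" for u
    using that by (cases u) (auto simp: Bp_def cyl_def)
  have PBp: "P u = (K u - K (?R u)) * v u" if "u \<in> cyl" "u \<in> Bp" for u
  proof -
    have *: "fst u < lam" "\<epsilon>0 < \<bar>fst u - t0\<bar>" using Bp_iff that by auto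
    then have "u \<in> SA" using that by (cases u) (auto simp: SA_def cyl_def)
    moreover have "\<epsilon>0 < dist z0 u" "\<epsilon>0 < dist z0 (?R u)" using kfacts[OF that(1) *(1)] * by linarith+
    ultimately show ?thesis using that by (simp add: P_def G_def)
  qed
  have Pint: "integrable ?M P"
    using integrable_mult_indicator[OF Bps conjunct1[OF G_int[OF \<epsilon>0(1)]]] by (simp add: P_def)
  have Pnn: "0 \<le> P u" if "u \<in> space ?M" for u
  proof (cases "u \<in> Bp")
    case True
    have uc: "u \<in> cyl" using that spaceM by blast
    have *: "fst u < lam" "\<epsilon>0 < \<bar>fst u - t0\<bar>" using Bp_iff[OF uc] True by auto
    have "0 < dist z0 u" using kfacts[OF uc *(1)] * \<epsilon>0 by linarith
    then have "K (?R u) \<le> K u" using kfacts[OF uc *(1)] by blast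
    moreover have "v u \<ge> 0" using vle[OF uc] *(1) by simp
    ultimately show ?thesis using PBp[OF uc True] by simp
  next
    case False then show ?thesis by (simp add: P_def)
  qed
  have Ppos: "0 < P u" if "u \<in> U" for u
  proof -
    have uc: "u \<in> cyl" and vu: "v u > 0" and *: "fst u < lam" "\<epsilon>0 < \<bar>fst u - t0\<bar>" using Uv[OF that] by auto
    have "u \<in> Bp" using Bp_iff[OF uc] * by blast
    moreover have "K (?R u) < K u" using kfacts[OF uc *(1)] * \<epsilon>0 by auto
    ultimately show ?thesis using PBp[OF uc] vu by simp
  qed
  have intP: "integral\<^sup>L ?M P > 0"
  proof -
    have ge: "integral\<^sup>L ?M P \<ge> 0" using Pnn by (simp add: integral_nonneg)
    have "integral\<^sup>L ?M P \<noteq> 0"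
    proof
      assume "integral\<^sup>L ?M P = 0"
      then have "AE u in ?M. P u = 0"
        using integral_nonneg_eq_0_iff_AE[OF Pint] Pnn by (simp add: AE_I2)
      then obtain N where N: "{u \<in> space ?M. \<not> P u = 0} \<subseteq> N" "emeasure ?M N = 0" "N \<in> sets ?M"
        by (rule AE_E)
      have "U \<subseteq> N"
      proof
        fix u assume "u \<in> U"
        then have "u \<in> space ?M" "P u \<noteq> 0" using Uv[of u] Ppos[of u] spaceM[of u] by auto
        then show "u \<in> N" using N(1) by blast
      qed
      then have "emeasure ?M U \<le> emeasure ?M N" by (intro emeasure_mono N(3))
      then show False using Upos N(2) by simp
    qed
    then show ?thesis using ge by simp
  qed
  define C where "C = MK * Vb"
  have Cnn: "C \<ge> 0" using MKnn Vb(1) by (simp add: C_def)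
  define Sr where "Sr = measure (sphere_measure :: (real^'n) measure) (sphere 0 1)"
  have Srnn: "Sr \<ge> 0" by (simp add: Sr_def)
  define Box where "Box = (\<lambda>\<epsilon>. {t0 - \<epsilon>..t0 + \<epsilon>} \<times> sphere (0::real^'n) 1)"
  have Box_s: "Box \<epsilon> \<in> sets ?M" for \<epsilon> unfolding Box_def by (intro cyl_Times_sets sph_sets) auto
  have Box_em: "emeasure ?M (Box \<epsilon>) = ennreal (2 * \<epsilon>) * emeasure sphere_measure (sphere (0::real^'n) 1)"
    if "\<epsilon> > 0" for \<epsilon>
    unfolding Box_def using that by (subst emeasure_cyl_Times) (auto intro: sph_sets)
  have Box_fin: "emeasure ?M (Box \<epsilon>) < \<infinity>" if "\<epsilon> > 0" for \<epsilon>
    using Box_em[OF that] using sphere_measure_finite[unfolded infinity_ennreal_def, where 'n='n] by (simp add: ennreal_mult_less_top)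
  have Box_meas: "measure ?M (Box \<epsilon>) = 2 * \<epsilon> * Sr" if "\<epsilon> > 0" for \<epsilon>
    using Box_em[OF that] that by (simp add: measure_def Sr_def enn2real_mult)
  have lower: "integral\<^sup>L ?M P - C * (2 * \<epsilon> * Sr) \<le> integral\<^sup>L ?M (h \<epsilon>)"
    if e: "0 < \<epsilon>" "\<epsilon> \<le> \<epsilon>0" for \<epsilon>
  proof -
    have bi: "integrable ?M (indicator (Box \<epsilon>) :: _ \<Rightarrow> real)"
      using Box_s Box_fin[OF e(1)] by (rule integrable_real_indicator)
    have pt: "P u - C * indicator (Box \<epsilon>) u \<le> G \<epsilon> u" if u: "u \<in> space ?M" for u
    proof -
      obtain s \<theta> where ueq: "u = (s, \<theta>)" by (cases u)
      have uc: "u \<in> cyl" using u spaceM by blast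
      then have th: "norm \<theta> = 1" by (simp add: ueq cyl_def)
      show ?thesis
      proof (cases "s < lam")
        case False
        then have "P u = 0" "G \<epsilon> u = 0" using Bp_iff[OF uc]
          by (auto simp: P_def G_def SA_def ueq)
        then show ?thesis using Cnn by simp
      next
        case True
        have fs: "fst u < lam" using True by (simp add: ueq)
        note kf = kfacts[OF uc fs]
        have SAu: "indicator SA u = (1::real)" using True th by (simp add: SA_def ueq)
        have Bpu: "indicator Bp u = (if \<epsilon>0 < \<bar>s - t0\<bar> then 1 else (0::real))"
          using Bp_iff[OF uc] True by (simp add: indicator_def ueq)
        have Boxu: "indicator (Box \<epsilon>) u = (if \<bar>s - t0\<bar> \<le> \<epsilon> then 1 else (0::real))"
          using th by (auto simp: Box_def indicator_def ueq abs_le_iff)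
        have vn: "0 \<le> v u" using vle[OF uc] fs by simp
        have vb: "\<bar>s - t0\<bar> \<le> 1 \<Longrightarrow> v u \<le> Vb" using Vb(2)[OF uc] by (simp add: ueq)
        have main: "(if \<epsilon>0 < \<bar>s - t0\<bar> then ((if \<epsilon>0 < dist z0 u then 1 else 0) * K u - (if \<epsilon>0 < dist z0 (?R u) then 1 else 0) * K (?R u)) * v u else 0)
           - MK * Vb * (if \<bar>s - t0\<bar> \<le> \<epsilon> then 1 else 0)
           \<le> ((if \<epsilon> < dist z0 u then 1 else 0) * K u - (if \<epsilon> < dist z0 (?R u) then 1 else 0) * K (?R u)) * v u"
          by (rule pw) (use e \<epsilon>0 kf vn vb Vb(1) in \<open>auto simp: ueq\<close>)
        have i1: "indicator {w. x < dist z0 w} u = (if x < dist z0 u then 1 else (0::real))" for x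
          by (simp add: indicator_def)
        have i2: "indicator {w. x < dist z0 (?R w)} u = (if x < dist z0 (?R u) then 1 else (0::real))" for x
          by (simp add: indicator_def)
        have Pu: "P u = (if \<epsilon>0 < \<bar>s - t0\<bar> then ((if \<epsilon>0 < dist z0 u then 1 else 0) * K u - (if \<epsilon>0 < dist z0 (?R u) then 1 else 0) * K (?R u)) * v u else 0)"
          unfolding P_def G_def SAu Bpu i1 i2 by simp
        have Gu: "G \<epsilon> u = ((if \<epsilon> < dist z0 u then 1 else 0) * K u - (if \<epsilon> < dist z0 (?R u) then 1 else 0) * K (?R u)) * v u"
          unfolding G_def SAu i1 i2 by simp
        show ?thesis using main unfolding Pu Gu Boxu C_def by simp
      qed
    qed
    have Gi: "integrable ?M (G \<epsilon>)" and GI: "integral\<^sup>L ?M (G \<epsilon>) = integral\<^sup>L ?M (h \<epsilon>)"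
      using G_int[OF e(1)] by auto
    have li: "integrable ?M (\<lambda>u. P u - C * indicator (Box \<epsilon>) u)"
      using Pint bi by simp
    have "integral\<^sup>L ?M (\<lambda>u. P u - C * indicator (Box \<epsilon>) u) \<le> integral\<^sup>L ?M (G \<epsilon>)"
      by (rule Bochner_Integration.integral_mono[OF li Gi pt])
    moreover have "integral\<^sup>L ?M (\<lambda>u. P u - C * indicator (Box \<epsilon>) u) = integral\<^sup>L ?M P - C * measure ?M (Box \<epsilon>)"
    proof -
      have "Box \<epsilon> \<inter> space ?M = Box \<epsilon>" using sets.sets_into_space[OF Box_s] by blast
      then show ?thesis using Pint bi by simp
    qed
    ultimately show ?thesis using GI Box_meas[OF e(1)] by simp
  qed
  define \<delta> where "\<delta> = integral\<^sup>L ?M P"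
  have "eventually (\<lambda>\<epsilon>. integral\<^sup>L ?M (h \<epsilon>) < \<delta> / 2) (at_right 0)"
  proof (rule order_tendstoD(2)[OF h_lim])
    show "- I < \<delta> / 2" using Inn intP by (simp add: \<delta>_def)
  qed
  then obtain b where b: "b > 0" "\<And>y. y > 0 \<Longrightarrow> y < b \<Longrightarrow> integral\<^sup>L ?M (h y) < \<delta> / 2"
    unfolding eventually_at_right_field by auto
  define \<epsilon> where "\<epsilon> = min (b / 2) (min \<epsilon>0 (\<delta> / (8 * (C * Sr + 1))))"
  have CS: "C * Sr + 1 > 0" using Cnn Srnn by (simp add: add_nonneg_pos)
  have \<delta>pos: "\<delta> > 0" using intP by (simp add: \<delta>_def)
  have epos: "\<epsilon> > 0" using b(1) \<epsilon>0(1) \<delta>pos CS by (simp add: \<epsilon>_def)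
  have eb: "\<epsilon> < b" using b(1) by (simp add: \<epsilon>_def)
  have ee0: "\<epsilon> \<le> \<epsilon>0" by (simp add: \<epsilon>_def)
  have ed: "\<epsilon> \<le> \<delta> / (8 * (C * Sr + 1))" by (simp add: \<epsilon>_def)
  then have ed2: "\<epsilon> * (8 * (C * Sr + 1)) \<le> \<delta>" using CS by (simp add: pos_le_divide_eq)
  have "C * (2 * \<epsilon> * Sr) = 2 * \<epsilon> * (C * Sr)" by simp
  also have "\<dots> \<le> 2 * \<epsilon> * (C * Sr + 1)" using epos by simp
  also have "\<dots> \<le> \<delta> / 4" using ed2 by (simp add: algebra_simps)
  finally have "C * (2 * \<epsilon> * Sr) \<le> \<delta> / 4" .
  moreover have "\<delta> - C * (2 * \<epsilon> * Sr) \<le> integral\<^sup>L ?M (h \<epsilon>)" using lower[OF epos ee0] by (simp add: \<delta>_def)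
  moreover have "integral\<^sup>L ?M (h \<epsilon>) < \<delta> / 2" using b(2)[OF epos eb] .
  ultimately show False using \<delta>pos by linarith
qed

end
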